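(* Let $n\ge 1$. If $E\subseteq\mathbb{N}\times\mathbb{N}$ is a $\Sigma^0_{n+1}$ index equivalence relation, then $E$ is $\Pi^0_n$-graphable with diameter $2$.
   Context: $\varphi_e$ denotes the $e$-th partial computable function in a standard acceptable numbering. An equivalence relation $E$ on $\mathbb{N}$ is an index equivalence relation if whenever $\varphi_a=\varphi_{a'}$ and $\varphi_b=\varphi_{b'}$, we have $aEb\iff a'Eb'$. An equivalence relation $E$ on $X$ is $\Gamma$-graphable (for a pointclass $\Gamma$) if there is a simple undirected graph $G\subseteq X\times X$ in $\Gamma$ whose connectedness relation equals $E$; it is $\Gamma$-graphable with diameter $k$ if such a $G$ exists in which $k$ is the least integer such that any two $G$-connected points are joined by a path of length at most $k$. *)

theory Defs
  imports Main "HOL-Library.Nat_Bijection"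
begin

datatype recf = Zero | Succ | Proj nat | Comp recf "recf list" | Prim recf recf | Mini recf

inductive eval :: "recf \<Rightarrow> nat list \<Rightarrow> nat \<Rightarrow> bool" where
  eval_zero: "eval Zero xs 0"
| eval_succ: "eval Succ (x # xs) (Suc x)"
| eval_proj: "i < length xs \<Longrightarrow> eval (Proj i) xs (xs ! i)"
| eval_comp: "length ys = length gs \<Longrightarrow> (\<forall>i < length gs. eval (gs ! i) xs (ys ! i))
              \<Longrightarrow> eval f ys v \<Longrightarrow> eval (Comp f gs) xs v"
| eval_prim0: "eval f xs v \<Longrightarrow> eval (Prim f g) (0 # xs) v"
| eval_primS: "eval (Prim f g) (m # xs) u \<Longrightarrow> eval g (m # u # xs) v
              \<Longrightarrow> eval (Prim f g) (Suc m # xs) v"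
| eval_mini: "eval f (y # xs) 0 \<Longrightarrow> (\<forall>z < y. \<exists>v. eval f (z # xs) (Suc v))
              \<Longrightarrow> eval (Mini f) xs y"

definition partial_computable :: "(nat \<Rightarrow> nat option) \<Rightarrow> bool" where
  "partial_computable f \<longleftrightarrow> (\<exists>r. \<forall>x v. eval r [x] v \<longleftrightarrow> f x = Some v)"

definition partial_computable2 :: "(nat \<Rightarrow> nat \<Rightarrow> nat option) \<Rightarrow> bool" where
  "partial_computable2 g \<longleftrightarrow> partial_computable (\<lambda>z. case prod_decode z of (x, y) \<Rightarrow> g x y)"

definition total_computable :: "(nat \<Rightarrow> nat) \<Rightarrow> bool" where
  "total_computable s \<longleftrightarrow> partial_computable (\<lambda>x. Some (s x))"

text \<open>Acceptable (Goedel) numbering of the partial computable functions (Rogers):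
  the universal function is partial computable and the s-m-n property holds.\<close>
definition acceptable_numbering :: "(nat \<Rightarrow> nat \<Rightarrow> nat option) \<Rightarrow> bool" where
  "acceptable_numbering \<phi> \<longleftrightarrow>
     partial_computable2 \<phi> \<and>
     (\<forall>g. partial_computable2 g \<longrightarrow> (\<exists>s. total_computable s \<and> (\<forall>x y. \<phi> (s x) y = g x y)))"

definition decidable_set :: "nat set \<Rightarrow> bool" where
  "decidable_set A \<longleftrightarrow> total_computable (\<lambda>x. if x \<in> A then 1 else 0)"

fun arith_sigma :: "nat \<Rightarrow> nat set \<Rightarrow> bool" where
  "arith_sigma 0 A = decidable_set A"
| "arith_sigma (Suc n) A =
     (\<exists>B. arith_sigma n (- B) \<and> A = {x. \<exists>y. prod_encode (x, y) \<in> B})"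

definition arith_pi :: "nat \<Rightarrow> nat set \<Rightarrow> bool" where
  "arith_pi n A \<longleftrightarrow> arith_sigma n (- A)"

definition rel_code :: "(nat \<times> nat) set \<Rightarrow> nat set" where
  "rel_code R = prod_encode ` R"

definition index_equivalence :: "(nat \<Rightarrow> nat \<Rightarrow> nat option) \<Rightarrow> (nat \<times> nat) set \<Rightarrow> bool" where
  "index_equivalence \<phi> E \<longleftrightarrow> equiv UNIV E \<and>
     (\<forall>a a' b b'. \<phi> a = \<phi> a' \<longrightarrow> \<phi> b = \<phi> b' \<longrightarrow> ((a, b) \<in> E \<longleftrightarrow> (a', b') \<in> E))"

definition simple_graph :: "('a \<times> 'a) set \<Rightarrow> bool" where
  "simple_graph G \<longleftrightarrow> sym G \<and> irrefl G"

definition has_diameter :: "('a \<times> 'a) set \<Rightarrow> nat \<Rightarrow> bool" where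
  "has_diameter G k \<longleftrightarrow>
     (\<forall>x y. (x, y) \<in> G\<^sup>* \<longrightarrow> (\<exists>j\<le>k. (x, y) \<in> G ^^ j)) \<and>
     (\<forall>k' < k. \<not> (\<forall>x y. (x, y) \<in> G\<^sup>* \<longrightarrow> (\<exists>j\<le>k'. (x, y) \<in> G ^^ j)))"

definition graphable_with_diameter ::
    "(nat set \<Rightarrow> bool) \<Rightarrow> (nat \<times> nat) set \<Rightarrow> nat \<Rightarrow> bool" where
  "graphable_with_diameter \<Gamma> E k \<longleftrightarrow>
     (\<exists>G. \<Gamma> (rel_code G) \<and> simple_graph G \<and> G\<^sup>* = E \<and> has_diameter G k)"

end

theory Submission
  imports Defs
begin


definition comp_by :: "recf \<Rightarrow> nat \<Rightarrow> (nat list \<Rightarrow> nat option) \<Rightarrow> bool" where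
  "comp_by r k F \<longleftrightarrow> (\<forall>xs v. length xs = k \<longrightarrow> (eval r xs v \<longleftrightarrow> F xs = Some v))"

definition pcomp :: "nat \<Rightarrow> (nat list \<Rightarrow> nat option) \<Rightarrow> bool" where
  "pcomp k F \<longleftrightarrow> (\<exists>r. comp_by r k F)"

definition tcomp :: "nat \<Rightarrow> (nat list \<Rightarrow> nat) \<Rightarrow> bool" where
  "tcomp k f \<longleftrightarrow> pcomp k (\<lambda>xs. Some (f xs))"

lemma pcomp_cong:
  assumes "pcomp k F" "\<And>xs. length xs = k \<Longrightarrow> F xs = G xs"
  shows "pcomp k G"
  using assms unfolding pcomp_def comp_by_def by metis

lemma tcomp_cong:
  assumes "tcomp k f" "\<And>xs. length xs = k \<Longrightarrow> f xs = g xs"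
  shows "tcomp k g"
  using assms unfolding tcomp_def by (metis pcomp_cong)

lemma tc_zero: "tcomp k (\<lambda>_. 0)"
  unfolding tcomp_def pcomp_def comp_by_def
  by (rule exI[of _ Zero]) (auto elim: eval.cases intro: eval.intros)

lemma tc_succ1: "tcomp 1 (\<lambda>xs. Suc (xs!0))"
  unfolding tcomp_def pcomp_def comp_by_def
  apply (rule exI[of _ Succ])
  apply clarify
  subgoal for xs v
    by (cases xs) (auto elim: eval.cases intro: eval.intros)
  done

lemma tc_proj: "i < k \<Longrightarrow> tcomp k (\<lambda>xs. xs!i)"
  unfolding tcomp_def pcomp_def comp_by_def
  by (rule exI[of _ "Proj i"]) (auto elim: eval.cases intro: eval.intros)

lemma eval_Comp_iff:
  "eval (Comp f gs) xs v \<longleftrightarrow> (\<exists>ys. length ys = length gs \<and> (\<forall>i < length gs. eval (gs ! i) xs (ys ! i)) \<and> eval f ys v)"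
  by (auto elim: eval.cases intro: eval.intros)

lemma comp_by_Comp:
  assumes len: "length gs = length Fs"
    and gs: "\<And>i. i < length Fs \<Longrightarrow> comp_by (gs!i) k (Fs!i)"
    and f: "comp_by f (length Fs) H"
  shows "comp_by (Comp f gs) k
     (\<lambda>xs. if (\<forall>F\<in>set Fs. F xs \<noteq> None) then H (map (\<lambda>F. the (F xs)) Fs) else None)"
  unfolding comp_by_def
proof (intro allI impI)
  fix xs :: "nat list" and v assume lx: "length xs = k"
  show "eval (Comp f gs) xs v \<longleftrightarrow>
     (if (\<forall>F\<in>set Fs. F xs \<noteq> None) then H (map (\<lambda>F. the (F xs)) Fs) else None) = Some v"
  proof
    assume "eval (Comp f gs) xs v"
    then obtain ys where ys: "length ys = length gs" "\<forall>i < length gs. eval (gs ! i) xs (ys ! i)" "eval f ys v"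
      unfolding eval_Comp_iff by blast
    have Fi: "(Fs!i) xs = Some (ys!i)" if "i < length Fs" for i
      using gs[OF that] ys(2) that len lx unfolding comp_by_def by auto
    have all: "\<forall>F\<in>set Fs. F xs \<noteq> None"
      using Fi by (metis in_set_conv_nth option.distinct(1))
    have "ys = map (\<lambda>F. the (F xs)) Fs"
      by (rule nth_equalityI) (use ys(1) len Fi in auto)
    then show "(if (\<forall>F\<in>set Fs. F xs \<noteq> None) then H (map (\<lambda>F. the (F xs)) Fs) else None) = Some v"
      using all ys(3) f ys(1) len unfolding comp_by_def by auto
  next
    assume h: "(if (\<forall>F\<in>set Fs. F xs \<noteq> None) then H (map (\<lambda>F. the (F xs)) Fs) else None) = Some v"
    then have all: "\<forall>F\<in>set Fs. F xs \<noteq> None" by (auto split: if_splits)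
    define ys where "ys = map (\<lambda>F. the (F xs)) Fs"
    have "eval f ys v" using h all f unfolding ys_def comp_by_def by auto
    moreover have "\<forall>i < length gs. eval (gs ! i) xs (ys ! i)"
    proof (intro allI impI)
      fix i assume i: "i < length gs"
      have "(Fs!i) xs \<noteq> None" using all i len by auto
      then have "(Fs!i) xs = Some (ys!i)" using i len unfolding ys_def by auto
      then show "eval (gs ! i) xs (ys ! i)" using gs[of i] i len lx unfolding comp_by_def by auto
    qed
    moreover have "length ys = length gs" using len unfolding ys_def by simp
    ultimately show "eval (Comp f gs) xs v" unfolding eval_Comp_iff by blast
  qed
qed

lemma pcomp_comp:
  assumes "pcomp (length Fs) H" "\<And>F. F \<in> set Fs \<Longrightarrow> pcomp k F"
  shows "pcomp k (\<lambda>xs. if (\<forall>F\<in>set Fs. F xs \<noteq> None) then H (map (\<lambda>F. the (F xs)) Fs) else None)"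
proof -
  obtain f where f: "comp_by f (length Fs) H" using assms(1) unfolding pcomp_def by blast
  have "\<forall>i < length Fs. \<exists>r. comp_by r k (Fs!i)" using assms(2) unfolding pcomp_def by auto
  then obtain R where R: "\<forall>i < length Fs. comp_by (R i) k (Fs!i)" by metis
  define gs where "gs = map R [0..<length Fs]"
  show ?thesis unfolding pcomp_def
    by (rule exI[of _ "Comp f gs"], rule comp_by_Comp[OF _ _ f]) (auto simp: gs_def R)
qed

lemma tcomp_comp:
  assumes "tcomp (length fs) h" "\<And>f. f \<in> set fs \<Longrightarrow> tcomp k f"
  shows "tcomp k (\<lambda>xs. h (map (\<lambda>f. f xs) fs))"
proof -
  have "pcomp k (\<lambda>xs. if (\<forall>F\<in>set (map (\<lambda>f xs. Some (f xs)) fs). F xs \<noteq> None)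
       then Some (h (map (\<lambda>F. the (F xs)) (map (\<lambda>f xs. Some (f xs)) fs))) else None)"
    by (rule pcomp_comp) (use assms in \<open>auto simp: tcomp_def\<close>)
  then show ?thesis unfolding tcomp_def by (rule pcomp_cong) (simp add: comp_def)
qed

lemma tc_comp1: "tcomp 1 h \<Longrightarrow> tcomp k f \<Longrightarrow> tcomp k (\<lambda>xs. h [f xs])"
  using tcomp_comp[of "[f]" h k] by auto
lemma tc_comp2: "tcomp 2 h \<Longrightarrow> tcomp k f \<Longrightarrow> tcomp k g \<Longrightarrow> tcomp k (\<lambda>xs. h [f xs, g xs])"
  using tcomp_comp[of "[f,g]" h k] by (auto simp: numeral_2_eq_2)
lemma tc_comp3: "tcomp 3 h \<Longrightarrow> tcomp k f \<Longrightarrow> tcomp k g \<Longrightarrow> tcomp k e \<Longrightarrow> tcomp k (\<lambda>xs. h [f xs, g xs, e xs])"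
  using tcomp_comp[of "[f,g,e]" h k] by (auto simp: numeral_3_eq_3)

fun prec :: "(nat list \<Rightarrow> nat) \<Rightarrow> (nat list \<Rightarrow> nat) \<Rightarrow> nat \<Rightarrow> nat list \<Rightarrow> nat" where
  "prec f g 0 ys = f ys"
| "prec f g (Suc m) ys = g (m # prec f g m ys # ys)"

lemma eval_Prim0: "eval (Prim f g) (0 # xs) v \<longleftrightarrow> eval f xs v"
  by (auto elim: eval.cases intro: eval.intros)
lemma eval_PrimS: "eval (Prim f g) (Suc m # xs) v \<longleftrightarrow> (\<exists>u. eval (Prim f g) (m # xs) u \<and> eval g (m # u # xs) v)"
  by (auto elim: eval.cases intro: eval.intros)

lemma tc_prec:
  assumes "tcomp k f" "tcomp (Suc (Suc k)) g"
  shows "tcomp (Suc k) (\<lambda>xs. prec f g (hd xs) (tl xs))"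
proof -
  obtain rf where rf: "comp_by rf k (\<lambda>xs. Some (f xs))" using assms(1) unfolding tcomp_def pcomp_def by blast
  obtain rg where rg: "comp_by rg (Suc (Suc k)) (\<lambda>xs. Some (g xs))" using assms(2) unfolding tcomp_def pcomp_def by blast
  have main: "length ys = k \<Longrightarrow> eval (Prim rf rg) (m # ys) v \<longleftrightarrow> v = prec f g m ys" for m ys v
  proof (induction m arbitrary: v)
    case 0 then show ?case using rf unfolding comp_by_def by (auto simp: eval_Prim0)
  next
    case (Suc m) then show ?case using rg unfolding comp_by_def by (auto simp: eval_PrimS)
  qed
  show ?thesis unfolding tcomp_def pcomp_def comp_by_def
    apply (rule exI[of _ "Prim rf rg"])
    apply clarify
    subgoal for xs v using main[of "tl xs" "hd xs" v] by (cases xs) auto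
    done
qed

lemma eval_Mini_iff: "eval (Mini f) xs y \<longleftrightarrow> eval f (y # xs) 0 \<and> (\<forall>z < y. \<exists>v. eval f (z # xs) (Suc v))"
  by (auto elim: eval.cases intro: eval.intros)

lemma tc_mini:
  assumes "tcomp (Suc k) f" "\<And>xs. length xs = k \<Longrightarrow> \<exists>y. f (y # xs) = 0"
  shows "tcomp k (\<lambda>xs. LEAST y. f (y # xs) = 0)"
proof -
  obtain rf where rf: "comp_by rf (Suc k) (\<lambda>xs. Some (f xs))" using assms(1) unfolding tcomp_def pcomp_def by blast
  show ?thesis unfolding tcomp_def pcomp_def
  proof (rule exI[of _ "Mini rf"], unfold comp_by_def, intro allI impI)
    fix xs :: "nat list" and v assume lx: "length xs = k"
    have ev: "eval rf (y # xs) u \<longleftrightarrow> u = f (y # xs)" for y u using rf lx unfolding comp_by_def by auto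
    have "eval (Mini rf) xs v \<longleftrightarrow> f (v # xs) = 0 \<and> (\<forall>z<v. f (z # xs) \<noteq> 0)"
      unfolding eval_Mini_iff ev by (metis not0_implies_Suc nat.distinct(1))
    also have "\<dots> \<longleftrightarrow> v = (LEAST y. f (y # xs) = 0)"
    proof
      assume h: "f (v # xs) = 0 \<and> (\<forall>z<v. f (z # xs) \<noteq> 0)"
      show "v = (LEAST y. f (y # xs) = 0)"
        by (rule Least_equality[symmetric]) (use h in \<open>auto simp: not_less[symmetric]\<close>)
    next
      assume h: "v = (LEAST y. f (y # xs) = 0)"
      obtain y where "f (y # xs) = 0" using assms(2)[OF lx] by blast
      then show "f (v # xs) = 0 \<and> (\<forall>z<v. f (z # xs) \<noteq> 0)"
        unfolding h by (metis (mono_tags, lifting) LeastI not_less_Least)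
    qed
    finally show "eval (Mini rf) xs v \<longleftrightarrow> Some (LEAST y. f (y # xs) = 0) = Some v" by auto
  qed
qed



lemma tc_precn:
  assumes "tcomp k f" "tcomp kk g" "kk = Suc (Suc k)" "kj = Suc k"
  shows "tcomp kj (\<lambda>xs. prec f g (hd xs) (tl xs))"
  using tc_prec assms by auto

lemma tc_Suc: assumes "tcomp k f" shows "tcomp k (\<lambda>xs. Suc (f xs))"
  by (rule tcomp_cong[OF tc_comp1[OF tc_succ1 assms]]) auto

lemma tc_const: "tcomp k (\<lambda>_. c)"
  by (induction c) (auto intro: tc_zero dest: tc_Suc)

lemma add2: "tcomp 2 (\<lambda>xs. xs!0 + xs!1)"
proof -
  let ?f = "\<lambda>ys::nat list. ys!0" and ?g = "\<lambda>zs::nat list. Suc (zs!1)"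
  have H: "tcomp 2 (\<lambda>xs. prec ?f ?g (hd xs) (tl xs))"
    by (rule tc_precn[where k=1 and kk="Suc (Suc 1)"]) ((intro tc_proj tc_Suc; simp), (intro tc_proj tc_Suc; simp), simp, simp)
  have eq: "prec ?f ?g m ys = m + ys!0" for m ys by (induction m) auto
  show ?thesis
    apply (rule tcomp_cong[OF H])
    subgoal for xs using eq[of "hd xs" "tl xs"] by (cases xs) (auto simp: nth_tl)
    done
qed

lemma tc_add: assumes "tcomp k f" "tcomp k g" shows "tcomp k (\<lambda>xs. f xs + g xs)"
  by (rule tcomp_cong[OF tc_comp2[OF add2 assms]]) auto

lemma pred1: "tcomp 1 (\<lambda>xs. xs!0 - 1)"
proof -
  let ?f = "\<lambda>ys::nat list. 0" and ?g = "\<lambda>zs::nat list. zs!0"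
  have H: "tcomp 1 (\<lambda>xs. prec ?f ?g (hd xs) (tl xs))"
    by (rule tc_precn[where k=0 and kk="Suc (Suc 0)"]) ((intro tc_proj tc_const; simp), (intro tc_proj tc_const; simp), simp, simp)
  have eq: "prec ?f ?g m ys = m - 1" for m ys by (induction m) auto
  show ?thesis
    apply (rule tcomp_cong[OF H])
    subgoal for xs using eq[of "hd xs" "tl xs"] by (cases xs) (auto simp: nth_tl)
    done
qed

lemma tc_pred: assumes "tcomp k f" shows "tcomp k (\<lambda>xs. f xs - 1)"
  by (rule tcomp_cong[OF tc_comp1[OF pred1 assms]]) auto

lemma sub2: "tcomp 2 (\<lambda>xs. xs!1 - xs!0)"
proof -
  let ?f = "\<lambda>ys::nat list. ys!0" and ?g = "\<lambda>zs::nat list. zs!1 - 1"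
  have H: "tcomp 2 (\<lambda>xs. prec ?f ?g (hd xs) (tl xs))"
    by (rule tc_precn[where k=1 and kk="Suc (Suc 1)"]) ((intro tc_proj tc_pred; simp), (intro tc_proj tc_pred; simp), simp, simp)
  have eq: "prec ?f ?g m ys = ys!0 - m" for m ys by (induction m) auto
  show ?thesis
    apply (rule tcomp_cong[OF H])
    subgoal for xs using eq[of "hd xs" "tl xs"] by (cases xs) (auto simp: nth_tl)
    done
qed

lemma tc_sub: assumes "tcomp k f" "tcomp k g" shows "tcomp k (\<lambda>xs. f xs - g xs)"
  by (rule tcomp_cong[OF tc_comp2[OF sub2 assms(2,1)]]) auto

lemma tri1: "tcomp 1 (\<lambda>xs. triangle (xs!0))"
proof -
  let ?f = "\<lambda>ys::nat list. 0" and ?g = "\<lambda>zs::nat list. zs!1 + Suc (zs!0)"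
  have H: "tcomp 1 (\<lambda>xs. prec ?f ?g (hd xs) (tl xs))"
    by (rule tc_precn[where k=0 and kk="Suc (Suc 0)"]) ((intro tc_proj tc_const tc_add tc_Suc; simp), (intro tc_proj tc_const tc_add tc_Suc; simp), simp, simp)
  have eq: "prec ?f ?g m ys = triangle m" for m ys by (induction m) auto
  show ?thesis
    apply (rule tcomp_cong[OF H])
    subgoal for xs using eq[of "hd xs" "tl xs"] by (cases xs) (auto simp: nth_tl)
    done
qed

lemma tc_triangle: assumes "tcomp k f" shows "tcomp k (\<lambda>xs. triangle (f xs))"
  by (rule tcomp_cong[OF tc_comp1[OF tri1 assms]]) auto

lemma tc_encode: "tcomp k f \<Longrightarrow> tcomp k g \<Longrightarrow> tcomp k (\<lambda>xs. prod_encode (f xs, g xs))"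
  unfolding prod_encode_def by (auto intro!: tc_add tc_triangle)

lemma cond3: "tcomp 3 (\<lambda>xs. if xs!0 = 0 then xs!1 else xs!2)"
proof -
  let ?f = "\<lambda>ys::nat list. ys!0" and ?g = "\<lambda>zs::nat list. zs!3"
  have H: "tcomp 3 (\<lambda>xs. prec ?f ?g (hd xs) (tl xs))"
    by (rule tc_precn[where k=2 and kk="Suc (Suc 2)"]) ((intro tc_proj; simp), (intro tc_proj; simp), simp, simp)
  have eq: "prec ?f ?g m ys = (if m = 0 then ys!0 else ys!1)" for m ys by (cases m) auto
  show ?thesis
    apply (rule tcomp_cong[OF H])
    subgoal for xs using eq[of "hd xs" "tl xs"] by (cases xs) (auto simp: nth_tl)
    done
qed

lemma tc_cond: assumes "tcomp k c" "tcomp k f" "tcomp k g" shows "tcomp k (\<lambda>xs. if c xs = 0 then f xs else g xs)"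
  by (rule tcomp_cong[OF tc_comp3[OF cond3 assms]]) auto

definition tpred :: "nat \<Rightarrow> (nat list \<Rightarrow> bool) \<Rightarrow> bool" where
  "tpred k P \<longleftrightarrow> tcomp k (\<lambda>xs. if P xs then 1 else 0)"

lemma tc_if: "tpred k P \<Longrightarrow> tcomp k f \<Longrightarrow> tcomp k g \<Longrightarrow> tcomp k (\<lambda>xs. if P xs then f xs else g xs)"
  unfolding tpred_def by (rule tcomp_cong[OF tc_cond[of k "\<lambda>xs. if P xs then 1 else 0" g f]]) auto

lemma tp_zero: "tcomp k f \<Longrightarrow> tpred k (\<lambda>xs. f xs = 0)"
  unfolding tpred_def by (rule tc_cond) (auto intro: tc_const)

lemma tp_cong: assumes "tpred k P" "\<And>xs. length xs = k \<Longrightarrow> P xs = Q xs" shows "tpred k Q"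
  using tcomp_cong[OF assms(1)[unfolded tpred_def]] assms(2) unfolding tpred_def by auto

lemma tp_eq: "tcomp k f \<Longrightarrow> tcomp k g \<Longrightarrow> tpred k (\<lambda>xs. f xs = g xs)"
  by (rule tp_cong[OF tp_zero[of k "\<lambda>xs. (f xs - g xs) + (g xs - f xs)"]]) (auto intro: tc_add tc_sub)

lemma tp_le: "tcomp k f \<Longrightarrow> tcomp k g \<Longrightarrow> tpred k (\<lambda>xs. f xs \<le> g xs)"
  by (rule tp_cong[OF tp_zero[of k "\<lambda>xs. f xs - g xs"]]) (auto intro: tc_sub)

lemma tp_not: "tpred k P \<Longrightarrow> tpred k (\<lambda>xs. \<not> P xs)"
  unfolding tpred_def by (rule tcomp_cong[OF tc_if[of k P "\<lambda>_. 0" "\<lambda>_. 1"]]) (auto simp: tpred_def intro: tc_const)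

lemma tp_less: "tcomp k f \<Longrightarrow> tcomp k g \<Longrightarrow> tpred k (\<lambda>xs. f xs < g xs)"
  by (rule tp_cong[OF tp_not[OF tp_le[of k g f]]]) auto

lemma tp_conj: "tpred k P \<Longrightarrow> tpred k Q \<Longrightarrow> tpred k (\<lambda>xs. P xs \<and> Q xs)"
  unfolding tpred_def by (rule tcomp_cong[OF tc_if[of k P "\<lambda>xs. if Q xs then 1 else 0" "\<lambda>_. 0"]]) (auto simp: tpred_def intro: tc_const)

lemma tp_disj: "tpred k P \<Longrightarrow> tpred k Q \<Longrightarrow> tpred k (\<lambda>xs. P xs \<or> Q xs)"
  unfolding tpred_def by (rule tcomp_cong[OF tc_if[of k P "\<lambda>_. 1" "\<lambda>xs. if Q xs then 1 else 0"]]) (auto simp: tpred_def intro: tc_const)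

lemma tp_ne: "tcomp k f \<Longrightarrow> tcomp k g \<Longrightarrow> tpred k (\<lambda>xs. f xs \<noteq> g xs)"
  by (intro tp_not tp_eq)

definition diag :: "nat \<Rightarrow> nat" where
  "diag z = (LEAST d. Suc z - triangle (Suc d) = 0)"

lemma triangle_ge: "n \<le> triangle n"
  by (induction n) auto

lemma diag1: "tcomp 1 (\<lambda>xs. diag (xs!0))"
proof -
  have H: "tcomp 1 (\<lambda>xs. LEAST y. (\<lambda>ys. Suc (ys!1) - triangle (Suc (ys!0))) (y # xs) = 0)"
  proof (rule tc_mini)
    show "tcomp (Suc 1) (\<lambda>ys. Suc (ys!1) - triangle (Suc (ys!0)))"
      by (intro tc_sub tc_Suc tc_triangle tc_proj) auto
    fix xs :: "nat list" assume "length xs = 1"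
    show "\<exists>y. (\<lambda>ys. Suc (ys!1) - triangle (Suc (ys!0))) (y # xs) = 0"
      by (rule exI[of _ "xs!0"]) (use triangle_ge[of "Suc (xs!0)"] in auto)
  qed
  then show ?thesis by (rule tcomp_cong) (auto simp: diag_def)
qed

lemma tc_diag: assumes "tcomp k f" shows "tcomp k (\<lambda>xs. diag (f xs))"
  by (rule tcomp_cong[OF tc_comp1[OF diag1 assms]]) auto

lemma diag_props: "triangle (diag z) \<le> z \<and> z < triangle (Suc (diag z))"
proof -
  have ex: "Suc z - triangle (Suc z) = 0" using triangle_ge[of "Suc z"] by linarith
  have 1: "Suc z - triangle (Suc (diag z)) = 0" unfolding diag_def by (rule LeastI[of "\<lambda>d. Suc z - triangle (Suc d) = 0", OF ex])
  have 2: "triangle (diag z) \<le> z"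
  proof (cases "diag z")
    case 0 then show ?thesis by simp
  next
    case (Suc d)
    have "\<not> (Suc z - triangle (Suc d) = 0)"
      using not_less_Least[of d "\<lambda>d. Suc z - triangle (Suc d) = 0"] Suc unfolding diag_def by auto
    then show ?thesis using Suc by auto
  qed
  show ?thesis using 1 2 by auto
qed

lemma prod_decode_diag:
  "prod_decode z = (z - triangle (diag z), diag z - (z - triangle (diag z)))"
proof -
  let ?d = "diag z"
  let ?m = "z - triangle ?d"
  have p: "triangle ?d \<le> z" "z < triangle ?d + Suc ?d" using diag_props[of z] by auto
  then have "?m \<le> ?d" by auto
  then have "prod_encode (?m, ?d - ?m) = z" using p by (simp add: prod_encode_def)
  then show ?thesis by (metis prod_encode_inverse)
qed

lemma tc_fst: "tcomp k f \<Longrightarrow> tcomp k (\<lambda>xs. fst (prod_decode (f xs)))"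
  unfolding prod_decode_diag by (auto intro!: tc_sub tc_triangle tc_diag)

lemma tc_snd: "tcomp k f \<Longrightarrow> tcomp k (\<lambda>xs. snd (prod_decode (f xs)))"
  unfolding prod_decode_diag by (auto intro!: tc_sub tc_triangle tc_diag)



lemma len1E: "length xs = Suc 0 \<Longrightarrow> (\<And>a. xs = [a] \<Longrightarrow> P) \<Longrightarrow> P"
  by (cases xs) auto

lemma pc_unary: "partial_computable F \<longleftrightarrow> pcomp 1 (\<lambda>xs. F (xs!0))"
proof -
  have "(\<forall>xs v. length xs = 1 \<longrightarrow> (eval r xs v \<longleftrightarrow> F (xs!0) = Some v)) \<longleftrightarrow> (\<forall>x v. eval r [x] v \<longleftrightarrow> F x = Some v)" for r
  proof
    assume "\<forall>xs v. length xs = 1 \<longrightarrow> (eval r xs v \<longleftrightarrow> F (xs!0) = Some v)"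
    then show "\<forall>x v. eval r [x] v \<longleftrightarrow> F x = Some v"
      by (metis One_nat_def length_Cons list.size(3) nth_Cons_0)
  next
    assume a: "\<forall>x v. eval r [x] v \<longleftrightarrow> F x = Some v"
    show "\<forall>xs v. length xs = 1 \<longrightarrow> (eval r xs v \<longleftrightarrow> F (xs!0) = Some v)"
    proof (intro allI impI)
      fix xs :: "nat list" and v assume "length xs = 1"
      then obtain x where "xs = [x]" by (auto elim: len1E)
      then show "eval r xs v \<longleftrightarrow> F (xs!0) = Some v" using a by simp
    qed
  qed
  then show ?thesis unfolding partial_computable_def pcomp_def comp_by_def by simp
qed

lemma tc_unary: "total_computable s \<longleftrightarrow> tcomp 1 (\<lambda>xs. s (xs!0))"
  unfolding total_computable_def tcomp_def pc_unary by simp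

lemma tc_app: assumes "total_computable s" "tcomp k f" shows "tcomp k (\<lambda>xs. s (f xs))"
  by (rule tcomp_cong[OF tc_comp1[OF assms(1)[unfolded tc_unary] assms(2)]]) auto

lemma pc_app: assumes "partial_computable U" "tcomp k f" shows "pcomp k (\<lambda>xs. U (f xs))"
proof -
  have "pcomp k (\<lambda>xs. if (\<forall>F\<in>set [\<lambda>xs. Some (f xs)]. F xs \<noteq> None)
     then (\<lambda>ys. U (ys!0)) (map (\<lambda>F. the (F xs)) [\<lambda>xs. Some (f xs)]) else None)"
    by (rule pcomp_comp) (use assms in \<open>auto simp: pc_unary tcomp_def\<close>)
  then show ?thesis by (rule pcomp_cong) auto
qed

lemma pc_bind_pair:
  assumes "partial_computable U" "pcomp k F" "tcomp k g"
  shows "pcomp k (\<lambda>xs. case F xs of None \<Rightarrow> None | Some v \<Rightarrow> U (prod_encode (v, g xs)))"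
proof -
  have H: "pcomp 2 (\<lambda>ys. U (prod_encode (ys!0, ys!1)))"
    by (rule pc_app[OF assms(1)]) (intro tc_encode tc_proj; simp)
  have "pcomp k (\<lambda>xs. if (\<forall>F\<in>set [F, \<lambda>xs. Some (g xs)]. F xs \<noteq> None)
     then (\<lambda>ys. U (prod_encode (ys!0, ys!1))) (map (\<lambda>F. the (F xs)) [F, \<lambda>xs. Some (g xs)]) else None)"
    by (rule pcomp_comp) (use assms H in \<open>auto simp: tcomp_def numeral_2_eq_2\<close>)
  then show ?thesis by (rule pcomp_cong) (auto split: option.splits)
qed

lemma tp_comp2:
  assumes "tpred 2 (\<lambda>xs. P (xs!0) (xs!1))" "tcomp k f" "tcomp k g"
  shows "tpred k (\<lambda>xs. P (f xs) (g xs))"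
  using tcomp_cong[OF tc_comp2[OF assms(1)[unfolded tpred_def] assms(2,3)]] unfolding tpred_def by auto

lemma tp_comp1:
  assumes "tpred 1 (\<lambda>xs. P (xs!0))" "tcomp k f"
  shows "tpred k (\<lambda>xs. P (f xs))"
  using tcomp_cong[OF tc_comp1[OF assms(1)[unfolded tpred_def] assms(2)]] unfolding tpred_def by auto

lemma tp_bex2:
  assumes "tpred 2 (\<lambda>xs. P (xs!0) (xs!1))"
  shows "tpred 2 (\<lambda>xs. \<exists>j < xs!0. P j (xs!1))"
proof -
  let ?f = "\<lambda>ys::nat list. 0::nat" and ?g = "\<lambda>zs::nat list. if P (zs!0) (zs!2) \<or> zs!1 \<noteq> 0 then 1 else 0::nat"
  have g: "tpred 3 (\<lambda>zs. P (zs!0) (zs!2) \<or> zs!1 \<noteq> 0)"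
    by (intro tp_disj tp_comp2[OF assms] tp_ne tc_proj tc_const) simp_all
  have H: "tcomp 2 (\<lambda>xs. prec ?f ?g (hd xs) (tl xs))"
    by (rule tc_precn[where k=1 and kk="Suc (Suc 1)"]) (use g in \<open>simp_all add: tpred_def tc_const numeral_3_eq_3\<close>)
  have eq: "prec ?f ?g m ys = (if \<exists>j<m. P j (ys!0) then 1 else 0)" for m ys
    by (induction m) (auto simp: less_Suc_eq)
  show ?thesis unfolding tpred_def
    apply (rule tcomp_cong[OF H])
    subgoal for xs using eq[of "hd xs" "tl xs"] by (cases xs) (auto simp: nth_tl)
    done
qed

lemma tp_bex:
  assumes "tpred 2 (\<lambda>xs. P (xs!0) (xs!1))" "tcomp k b" "tcomp k a"
  shows "tpred k (\<lambda>xs. \<exists>j < b xs. P j (a xs))"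
  using tp_comp2[OF tp_bex2[OF assms(1)] assms(2,3)] .

section \<open>Arithmetical hierarchy closure\<close>

lemma decidable_tp: "decidable_set A \<longleftrightarrow> tpred 1 (\<lambda>xs. xs!0 \<in> A)"
  unfolding decidable_set_def tc_unary tpred_def by simp

lemma decidable_compl: "decidable_set A \<Longrightarrow> decidable_set (- A)"
  unfolding decidable_tp by (rule tp_cong[OF tp_not]) auto

lemma decidable_preimage: assumes "decidable_set A" "total_computable f" shows "decidable_set (f -` A)"
proof -
  have t: "tcomp 1 (\<lambda>xs. f (xs!0))" using assms(2) tc_unary by blast
  have "tpred 1 (\<lambda>xs. f (xs!0) \<in> A)" by (rule tp_comp1[OF assms(1)[unfolded decidable_tp] t])
  then show ?thesis unfolding decidable_tp by simp
qed

lemma tc_fst1: "total_computable (\<lambda>z. fst (prod_decode z))"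
  unfolding tc_unary by (intro tc_fst tc_proj) simp
lemma tc_snd1: "total_computable (\<lambda>z. snd (prod_decode z))"
  unfolding tc_unary by (intro tc_snd tc_proj) simp

lemma sigma_preimage: "arith_sigma n A \<Longrightarrow> total_computable f \<Longrightarrow> arith_sigma n (f -` A)"
proof (induction n arbitrary: A f)
  case 0 then show ?case by (auto intro: decidable_preimage)
next
  case (Suc n)
  from Suc.prems obtain B where B: "arith_sigma n (- B)" "A = {x. \<exists>y. prod_encode (x, y) \<in> B}" by auto
  define h where "h z = prod_encode (f (fst (prod_decode z)), snd (prod_decode z))" for z
  have th: "total_computable h" unfolding tc_unary h_def
    by (intro tc_encode tc_app[OF Suc.prems(2)] tc_fst tc_snd tc_proj) simp_all
  have "arith_sigma n (- (h -` B))" using Suc.IH[OF B(1) th] by (simp add: vimage_Compl)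
  moreover have "f -` A = {x. \<exists>y. prod_encode (x, y) \<in> h -` B}"
    using B(2) by (auto simp: h_def)
  ultimately show ?case by (auto intro!: exI[of _ "h -` B"])
qed

lemma sigma_un_int: "arith_sigma n A \<Longrightarrow> arith_sigma n B \<Longrightarrow> arith_sigma n (A \<inter> B) \<and> arith_sigma n (A \<union> B)"
proof (induction n arbitrary: A B)
  case 0
  have a: "tpred 1 (\<lambda>xs. xs!0 \<in> A)" "tpred 1 (\<lambda>xs. xs!0 \<in> B)" using 0 by (simp_all add: decidable_tp)
  have "tpred 1 (\<lambda>xs. xs!0 \<in> A \<and> xs!0 \<in> B)" by (rule tp_conj[OF a])
  moreover have "tpred 1 (\<lambda>xs. xs!0 \<in> A \<or> xs!0 \<in> B)" by (rule tp_disj[OF a])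
  ultimately show ?case by (simp add: decidable_tp)
next
  case (Suc n)
  from Suc.prems(1) obtain BA where BA: "arith_sigma n (- BA)" "A = {x. \<exists>y. prod_encode (x, y) \<in> BA}" by auto
  from Suc.prems(2) obtain BB where BB: "arith_sigma n (- BB)" "B = {x. \<exists>y. prod_encode (x, y) \<in> BB}" by auto
  define h1 where "h1 z = prod_encode (fst (prod_decode z), fst (prod_decode (snd (prod_decode z))))" for z
  define h2 where "h2 z = prod_encode (fst (prod_decode z), snd (prod_decode (snd (prod_decode z))))" for z
  have t1: "total_computable h1" unfolding tc_unary h1_def
    by (intro tc_encode tc_fst tc_snd tc_proj) simp_all
  have t2: "total_computable h2" unfolding tc_unary h2_def
    by (intro tc_encode tc_fst tc_snd tc_proj) simp_all
  let ?C = "h1 -` BA \<inter> h2 -` BB"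
  have "arith_sigma n (h1 -` (- BA))" "arith_sigma n (h2 -` (- BB))"
    using sigma_preimage BA(1) BB(1) t1 t2 by auto
  then have "arith_sigma n (h1 -` (- BA) \<union> h2 -` (- BB))" using Suc.IH by blast
  moreover have "- ?C = h1 -` (- BA) \<union> h2 -` (- BB)" by auto
  ultimately have C: "arith_sigma n (- ?C)" by simp
  have "A \<inter> B = {x. \<exists>y. prod_encode (x, y) \<in> ?C}"
  proof (intro set_eqI iffI)
    fix x assume "x \<in> A \<inter> B"
    then obtain y1 y2 where "prod_encode (x, y1) \<in> BA" "prod_encode (x, y2) \<in> BB" using BA BB by auto
    then show "x \<in> {x. \<exists>y. prod_encode (x, y) \<in> ?C}"
      by (auto simp: h1_def h2_def intro!: exI[of _ "prod_encode (y1, y2)"])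
  next
    fix x assume "x \<in> {x. \<exists>y. prod_encode (x, y) \<in> ?C}"
    then show "x \<in> A \<inter> B" using BA BB by (auto simp: h1_def h2_def)
  qed
  then have I: "arith_sigma (Suc n) (A \<inter> B)" using C by (simp only: arith_sigma.simps) blast
  have "arith_sigma n (- BA \<inter> - BB)" using Suc.IH BA(1) BB(1) by blast
  moreover have "- (BA \<union> BB) = - BA \<inter> - BB" by auto
  moreover have "A \<union> B = {x. \<exists>y. prod_encode (x, y) \<in> BA \<union> BB}" using BA BB by auto
  ultimately have "arith_sigma (Suc n) (A \<union> B)" by (auto intro!: exI[of _ "BA \<union> BB"])
  with I show ?case by simp
qed

lemma decidable_sigma: "decidable_set A \<Longrightarrow> arith_sigma n A"
proof (induction n arbitrary: A)
  case 0 then show ?case by simp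
next
  case (Suc n)
  let ?B = "(\<lambda>z. fst (prod_decode z)) -` A"
  have "decidable_set (- ?B)" using decidable_preimage[OF decidable_compl[OF Suc.prems] tc_fst1] by (simp add: vimage_Compl)
  then have "arith_sigma n (- ?B)" by (rule Suc.IH)
  moreover have "A = {x. \<exists>y. prod_encode (x, y) \<in> ?B}" by auto
  ultimately show ?case by (auto intro!: exI[of _ ?B])
qed

lemma decidable_pi: "decidable_set A \<Longrightarrow> arith_pi n A"
  unfolding arith_pi_def by (rule decidable_sigma[OF decidable_compl])

lemma pi_preimage: "arith_pi n A \<Longrightarrow> total_computable f \<Longrightarrow> arith_pi n (f -` A)"
  unfolding arith_pi_def using sigma_preimage by (metis vimage_Compl)

lemma pi_int: "arith_pi n A \<Longrightarrow> arith_pi n B \<Longrightarrow> arith_pi n (A \<inter> B)"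
  unfolding arith_pi_def using sigma_un_int by (metis Compl_Int)

lemma pi_un: "arith_pi n A \<Longrightarrow> arith_pi n B \<Longrightarrow> arith_pi n (A \<union> B)"
  unfolding arith_pi_def using sigma_un_int by (metis Compl_Un)



lemma univ_pc: "acceptable_numbering \<phi> \<Longrightarrow> partial_computable (\<lambda>z. case prod_decode z of (x, y) \<Rightarrow> \<phi> x y)"
  unfolding acceptable_numbering_def partial_computable2_def by blast

lemma pc_phi:
  assumes "acceptable_numbering \<phi>" "tcomp k f" "tcomp k g"
  shows "pcomp k (\<lambda>xs. \<phi> (f xs) (g xs))"
proof -
  have "pcomp k (\<lambda>xs. (\<lambda>z. case prod_decode z of (x, y) \<Rightarrow> \<phi> x y) (prod_encode (f xs, g xs)))"
    by (rule pc_app[OF univ_pc[OF assms(1)]]) (intro tc_encode assms(2,3))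
  then show ?thesis by simp
qed

lemma tc_pcomp: "tcomp k f \<Longrightarrow> pcomp k (\<lambda>xs. Some (f xs))"
  unfolding tcomp_def .

lemma smn:
  assumes "acceptable_numbering \<phi>"
    and "pcomp 1 (\<lambda>xs. g (fst (prod_decode (xs!0))) (snd (prod_decode (xs!0))))"
  shows "\<exists>s. total_computable s \<and> (\<forall>x y. \<phi> (s x) y = g x y)"
proof -
  have "partial_computable2 g" unfolding partial_computable2_def pc_unary
    by (rule pcomp_cong[OF assms(2)]) (simp add: case_prod_beta)
  then show ?thesis using assms(1) unfolding acceptable_numbering_def by blast
qed

lemma tc_unaryI: "tcomp 1 (\<lambda>xs. s (xs!0)) \<Longrightarrow> total_computable s"
  by (simp add: tc_unary)

lemma kleene:
  assumes acc: "acceptable_numbering \<phi>" and f: "total_computable f"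
  shows "\<exists>e. \<phi> e = \<phi> (f e)"
proof -
  let ?U = "\<lambda>z. case prod_decode z of (x, y) \<Rightarrow> \<phi> x y"
  have "\<exists>d. total_computable d \<and> (\<forall>x y. \<phi> (d x) y = (case \<phi> x x of None \<Rightarrow> None | Some j \<Rightarrow> \<phi> j y))"
  proof (rule smn[OF acc])
    have "pcomp 1 (\<lambda>xs. case \<phi> (fst (prod_decode (xs!0))) (fst (prod_decode (xs!0))) of None \<Rightarrow> None
         | Some v \<Rightarrow> ?U (prod_encode (v, snd (prod_decode (xs!0)))))"
      by (rule pc_bind_pair[OF univ_pc[OF acc]]) (intro pc_phi[OF acc] tc_fst tc_snd tc_proj; simp)+
    then show "pcomp 1 (\<lambda>xs. case \<phi> (fst (prod_decode (xs!0))) (fst (prod_decode (xs!0))) of None \<Rightarrow> None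
         | Some j \<Rightarrow> \<phi> j (snd (prod_decode (xs!0))))"
      by (rule pcomp_cong) (simp split: option.splits)
  qed
  then obtain d where d: "total_computable d" "\<And>x y. \<phi> (d x) y = (case \<phi> x x of None \<Rightarrow> None | Some j \<Rightarrow> \<phi> j y)"
    by blast
  have "\<exists>s. total_computable s \<and> (\<forall>x y. \<phi> (s x) y = Some (f (d y)))"
  proof (rule smn[OF acc])
    show "pcomp 1 (\<lambda>xs. Some (f (d (snd (prod_decode (xs!0))))))"
      by (rule tc_pcomp) (intro tc_app[OF f] tc_app[OF d(1)] tc_snd tc_proj; simp)
  qed
  then obtain s :: "nat \<Rightarrow> nat" where s: "\<And>x y. \<phi> (s x) y = Some (f (d y))" by blast
  let ?c = "s 0"
  have "\<phi> (d ?c) y = \<phi> (f (d ?c)) y" for y using d(2)[of ?c y] s[of 0 ?c] by simp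
  then show ?thesis by blast
qed



abbreviation pe where "pe a b \<equiv> prod_encode (a, b)"
abbreviation pf where "pf z \<equiv> fst (prod_decode z)"
abbreviation ps where "ps z \<equiv> snd (prod_decode z)"

lemma tpC:
  assumes s0: "total_computable s0" and "tcomp k fx" "tcomp k fa" "tcomp k fk"
  shows "tpred k (\<lambda>xs. \<exists>j<fk xs. s0 (pe (fx xs) (pe (fa xs) j)) = s0 (pe (fx xs) (pe (fa xs) (fk xs))))"
proof -
  have P: "tpred 2 (\<lambda>xs. (\<lambda>j c. s0 (pe (pf c) (pe (pf (ps c)) j)) = s0 c) (xs!0) (xs!1))"
    unfolding tpred_def
    by (intro tc_if tp_eq tc_app[OF s0] tc_encode tc_fst tc_snd tc_proj tc_const; simp)
  have "tpred k (\<lambda>xs. \<exists>j < fk xs. (\<lambda>j c. s0 (pe (pf c) (pe (pf (ps c)) j)) = s0 c) j (pe (fx xs) (pe (fa xs) (fk xs))))"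
    by (rule tp_bex[OF P]) (intro tc_encode assms(2-4))+
  then show ?thesis by simp
qed

lemma padding:
  assumes acc: "acceptable_numbering \<phi>"
  shows "\<exists>p. total_computable p \<and> strict_mono p \<and> (\<forall>w. \<phi> (p w) = \<phi> (pf w))"
proof -
  have "\<exists>s. total_computable s \<and> (\<forall>z y. \<phi> (s z) y = \<phi> (pf z) (pe (ps z) y))"
    by (rule smn[OF acc]) (intro pc_phi[OF acc] tc_encode tc_fst tc_snd tc_proj; simp)
  then obtain s0 :: "nat \<Rightarrow> nat" where s0: "total_computable s0" "\<And>z y. \<phi> (s0 z) y = \<phi> (pf z) (pe (ps z) y)"
    by blast
  have "\<exists>s. total_computable s \<and> (\<forall>k y. \<phi> (s k) y = Some k)"
    by (rule smn[OF acc]) (rule tc_pcomp, intro tc_fst tc_proj; simp)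
  then obtain idx :: "nat \<Rightarrow> nat" where idx: "total_computable idx" "\<And>k y. \<phi> (idx k) y = Some k"
    by blast
  define C where "C x a k \<longleftrightarrow> (\<exists>j<k. s0 (pe x (pe a j)) = s0 (pe x (pe a k)))" for x a k
  have tC: "tpred k (\<lambda>xs. C (fx xs) (fa xs) (fk xs))" if "tcomp k fx" "tcomp k fa" "tcomp k fk" for k fx fa fk
    unfolding C_def by (rule tpC[OF s0(1) that])
  define G where "G x w y = \<phi> (if C x (pf w) (ps w) then idx (ps w) else pf w) y" for x w y
  have "\<exists>s. total_computable s \<and> (\<forall>x z. \<phi> (s x) z = G x (pf z) (ps z))"
  proof (rule smn[OF acc])
    show "pcomp 1 (\<lambda>xs. G (pf (xs!0)) (pf (ps (xs!0))) (ps (ps (xs!0))))"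
      unfolding G_def
      by (intro pc_phi[OF acc] tc_if tC tc_app[OF idx(1)] tc_fst tc_snd tc_proj; simp)
  qed
  then obtain s1 :: "nat \<Rightarrow> nat" where s1: "total_computable s1" "\<And>x z. \<phi> (s1 x) z = G x (pf z) (ps z)"
    by blast
  obtain e where e: "\<phi> e = \<phi> (s1 e)" using kleene[OF acc s1(1)] by blast
  define t where "t a k = s0 (pe e (pe a k))" for a k
  have tt: "tcomp k (\<lambda>xs. t (fa xs) (fk xs))" if "tcomp k fa" "tcomp k fk" for k fa fk
    unfolding t_def by (intro tc_app[OF s0(1)] tc_encode tc_const that)
  have Ct: "C e a k \<longleftrightarrow> (\<exists>j<k. t a j = t a k)" for a k unfolding C_def t_def ..
  have phit: "\<phi> (t a k) = \<phi> (if C e a k then idx k else a)" for a k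
  proof
    fix y
    have "\<phi> (t a k) y = \<phi> e (pe (pe a k) y)" unfolding t_def s0(2) by simp
    also have "\<dots> = G e (pe a k) y" using s1(2) e by simp
    finally show "\<phi> (t a k) y = \<phi> (if C e a k then idx k else a) y" unfolding G_def by simp
  qed
  have collide: "\<phi> a = (\<lambda>y. Some k)" if ck: "C e a k" for a k
  proof -
    let ?P = "\<lambda>j. t a j = t a k"
    have ex: "\<exists>j<k. ?P j" using ck unfolding Ct .
    define k0 where "k0 = (LEAST j. ?P j)"
    have ex2: "\<exists>j. ?P j" using ex by blast
    have k0: "?P k0" unfolding k0_def by (rule LeastI_ex[OF ex2])
    have nc: "\<not> C e a k0"
    proof
      assume "C e a k0"
      then obtain j where j: "j < k0" "t a j = t a k0" unfolding Ct by blast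
      then have "?P j" using k0 by simp
      then have "k0 \<le> j" unfolding k0_def by (rule Least_le)
      then show False using j(1) by simp
    qed
    have 1: "\<phi> (t a k0) = \<phi> a" using phit[of a k0] nc by (simp only: if_False)
    have 2: "\<phi> (t a k) = \<phi> (idx k)" using phit[of a k] ck by (simp only: if_True)
    have 3: "\<phi> (idx k) = (\<lambda>y. Some k)" using idx(2) by (intro ext) simp
    have "\<phi> a = \<phi> (t a k0)" using 1 by (rule sym)
    also have "\<dots> = \<phi> (t a k)" using k0 by (rule arg_cong)
    also have "\<dots> = (\<lambda>y. Some k)" using 2 3 by (rule trans)
    finally show ?thesis .
  qed
  have unbounded: "\<exists>k. \<not> C e a k \<and> M \<le> t a k" for a M
  proof (rule ccontr)
    assume "\<not> (\<exists>k. \<not> C e a k \<and> M \<le> t a k)"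
    then have small: "\<And>k. \<not> C e a k \<Longrightarrow> t a k < M" by (meson not_le)
    define kc where "kc = (if \<exists>k. C e a k then (SOME k. C e a k) else 0)"
    have onlykc: "k = kc" if "C e a k" for k
    proof -
      have ex: "\<exists>k. C e a k" using that by blast
      then have "C e a kc" unfolding kc_def by (simp add: someI_ex)
      then show ?thesis using collide[OF that] collide[of a kc] by (metis option.inject)
    qed
    let ?K = "{0..M+1} - {kc}"
    have inj: "inj_on (t a) ?K"
    proof (rule inj_onI)
      fix x y assume xy: "x \<in> ?K" "y \<in> ?K" "t a x = t a y"
      show "x = y"
      proof (rule ccontr)
        assume "x \<noteq> y"
        then have "x < y \<or> y < x" by auto
        then show False
        proof
          assume "x < y"
          then have "C e a y" using Ct xy(3) by metis
          then show False using onlykc xy(2) by auto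
        next
          assume "y < x"
          then have "C e a x" using Ct xy(3) by metis
          then show False using onlykc xy(1) by auto
        qed
      qed
    qed
    have sub: "t a ` ?K \<subseteq> {0..<M}"
    proof
      fix v assume "v \<in> t a ` ?K"
      then obtain k where k: "k \<in> ?K" "v = t a k" by blast
      have "\<not> C e a k" using onlykc k(1) by auto
      then show "v \<in> {0..<M}" using small k by auto
    qed
    have "card ?K \<le> card {0..<M}" using card_inj_on_le[OF inj sub] by simp
    moreover have "card ?K \<ge> M + 1"
      using card_Diff_singleton_if[of "{0..M+1}" kc] by (auto split: if_splits)
    ultimately show False by simp
  qed
  define mu where "mu a M = (LEAST i. \<not> C e a i \<and> M \<le> t a i)" for a M
  have mu: "\<not> C e a (mu a M) \<and> M \<le> t a (mu a M)" for a M
    unfolding mu_def using unbounded[of a M] by (metis (mono_tags, lifting) LeastI)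
  have mu2: "tcomp 2 (\<lambda>xs. mu (xs!0) (xs!1))"
  proof -
    define F where "F ys = (if \<not> C e (ys!1) (ys!0) \<and> ys!2 \<le> t (ys!1) (ys!0) then 0 else (1::nat))" for ys :: "nat list"
    have "tcomp 2 (\<lambda>xs. LEAST y. F (y # xs) = 0)"
    proof (rule tc_mini)
      show "tcomp (Suc 2) F" unfolding F_def
        by (intro tc_if tp_conj tp_not tC tp_le tt tc_proj tc_const; simp)
      fix xs :: "nat list" assume "length xs = 2"
      show "\<exists>y. F (y # xs) = 0"
        using unbounded[of "xs!0" "xs!1"] by (auto simp: F_def)
    qed
    then show ?thesis by (rule tcomp_cong) (simp add: mu_def F_def)
  qed
  have tmu: "tcomp k (\<lambda>xs. mu (f xs) (g xs))" if "tcomp k f" "tcomp k g" for k f g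
    by (rule tcomp_cong[OF tc_comp2[OF mu2 that]]) simp
  define P2 where "P2 w m = t (pf w) (mu (pf w) m)" for w m
  have tP2: "tcomp k (\<lambda>xs. P2 (f xs) (g xs))" if "tcomp k f" "tcomp k g" for k f g
    unfolding P2_def by (intro tt tmu tc_fst that)
  define Mx where "Mx w = prec (\<lambda>_. 0) (\<lambda>zs. Suc (P2 (zs!0) (zs!1))) w []" for w
  have tMx: "tcomp 1 (\<lambda>xs. Mx (xs!0))"
  proof -
    have H: "tcomp 1 (\<lambda>xs. prec (\<lambda>_. 0) (\<lambda>zs. Suc (P2 (zs!0) (zs!1))) (hd xs) (tl xs))"
      by (rule tc_precn[where k=0 and kk="Suc (Suc 0)"]) (rule tc_const, (intro tc_Suc tP2 tc_proj; simp), simp, simp)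
    show ?thesis
      apply (rule tcomp_cong[OF H])
      subgoal for xs by (cases xs) (auto simp: Mx_def)
      done
  qed
  define p where "p w = P2 w (Mx w)" for w
  have tp: "total_computable p" unfolding tc_unary p_def
    by (rule tP2[OF tc_proj tMx]) simp
  have pge: "Mx w \<le> p w" for w unfolding p_def P2_def using mu by blast
  have MxS: "Mx (Suc w) = Suc (p w)" for w unfolding Mx_def p_def by simp
  have "strict_mono p" unfolding strict_mono_Suc_iff
  proof
    fix w show "p w < p (Suc w)" using pge[of "Suc w"] MxS[of w] by simp
  qed
  moreover have "\<phi> (p w) = \<phi> (pf w)" for w
    unfolding p_def P2_def using phit mu by simp
  ultimately show ?thesis using tp by blast
qed



lemma pe_ge2: "b \<le> prod_encode (a, b)"
  unfolding prod_encode_def using triangle_ge[of "a+b"] by simp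

lemma ie_E:
  assumes "index_equivalence \<phi> E" "\<phi> a = \<phi> a'" "\<phi> b = \<phi> b'"
  shows "(a, b) \<in> E \<longleftrightarrow> (a', b') \<in> E"
  using assms unfolding index_equivalence_def by blast

theorem theorem5p1:
  fixes n :: nat and \<phi> :: "nat \<Rightarrow> nat \<Rightarrow> nat option" and E :: "(nat \<times> nat) set"
  assumes "n \<ge> 1"
    and "acceptable_numbering \<phi>"
    and "index_equivalence \<phi> E"
    and "arith_sigma (Suc n) (rel_code E)"
  shows "graphable_with_diameter (arith_pi n) E 2"
proof -
  note acc = assms(2) and ie = assms(3)
  have eq: "equiv UNIV E" using ie unfolding index_equivalence_def by blast
  have Erefl: "(a, a) \<in> E" for a using eq unfolding equiv_def refl_on_def by blast
  have Esym: "(a, b) \<in> E \<Longrightarrow> (b, a) \<in> E" for a b using eq unfolding equiv_def sym_def by blast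
  have Etrans: "(a, b) \<in> E \<Longrightarrow> (b, c) \<in> E \<Longrightarrow> (a, c) \<in> E" for a b c
    using eq unfolding equiv_def trans_def by blast
  obtain B where B: "arith_pi n B" "rel_code E = {x. \<exists>y. pe x y \<in> B}"
    using assms(4) unfolding arith_pi_def by auto
  have EB: "(a, b) \<in> E \<longleftrightarrow> (\<exists>y. pe (pe a b) y \<in> B)" for a b
  proof -
    have "(a, b) \<in> E \<longleftrightarrow> pe a b \<in> rel_code E"
      unfolding rel_code_def using inj_prod_encode by (auto simp: inj_on_def)
    then show ?thesis using B(2) by simp
  qed
  obtain p where p: "total_computable p" "strict_mono p" "\<And>w. \<phi> (p w) = \<phi> (pf w)"
    using padding[OF acc] by blast
  have pge: "w \<le> p w" for w using strict_mono_imp_increasing[OF p(2)] .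
  define q where "q z = (LEAST w. p w = z \<or> z < w)" for z
  have qp: "q (p w) = w" for w
    unfolding q_def
  proof (rule Least_equality)
    show "p w = p w \<or> p w < w" by simp
    fix w' assume "p w' = p w \<or> p w < w'"
    then show "w \<le> w'"
    proof
      assume "p w' = p w" then show ?thesis using strict_mono_eq[OF p(2)] by simp
    next
      assume "p w < w'" then show ?thesis using pge[of w] by simp
    qed
  qed
  have tq: "total_computable q"
  proof -
    define F where "F ys = (if p (ys!0) = ys!1 \<or> ys!1 < ys!0 then 0 else (1::nat))" for ys :: "nat list"
    have "tcomp 1 (\<lambda>xs. LEAST y. F (y # xs) = 0)"
    proof (rule tc_mini)
      show "tcomp (Suc 1) F" unfolding F_def
        by (intro tc_if tp_disj tp_eq tp_less tc_app[OF p(1)] tc_proj tc_const; simp)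
      fix xs :: "nat list" assume "length xs = 1"
      show "\<exists>y. F (y # xs) = 0" by (rule exI[of _ "Suc (xs!0)"]) (simp add: F_def)
    qed
    then show ?thesis unfolding tc_unary by (rule tcomp_cong) (simp add: q_def F_def)
  qed
  define W where "W x z \<longleftrightarrow> p (q z) = z \<and> (x = pf (q z) \<or> x = pf (ps (q z))) \<and>
      pe (pe (pf (q z)) (pf (ps (q z)))) (pf (ps (ps (q z)))) \<in> B" for x z
  define G where "G = {(x, z). x \<noteq> z \<and> (W x z \<or> W z x)}"
  have symG: "sym G" unfolding G_def sym_def by auto
  have irrG: "irrefl G" unfolding G_def irrefl_def by auto
  have WE: "(x, z) \<in> E" if "W x z" for x z
  proof -
    let ?w = "q z"
    have z: "z = p ?w" using that unfolding W_def by simp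
    have "(z, pf ?w) \<in> E" using ie_E[OF ie, of z "pf ?w" "pf ?w" "pf ?w"] p(3) z Erefl by metis
    then have zu: "(pf ?w, z) \<in> E" by (rule Esym)
    have uv: "(pf ?w, pf (ps ?w)) \<in> E" using that unfolding W_def EB by blast
    show ?thesis using that unfolding W_def
      using zu uv Esym Etrans by blast
  qed
  have GE: "G \<subseteq> E" unfolding G_def using WE Esym by auto
  have GsE: "G\<^sup>* \<subseteq> E"
  proof
    fix xy assume "xy \<in> G\<^sup>*"
    then show "xy \<in> E"
    proof (induction xy)
      case (Pair x y)
      then show ?case
      proof (induction rule: rtrancl_induct)
        case base then show ?case by (rule Erefl)
      next
        case (step b c) then show ?case using GE Etrans by blast
      qed
    qed
  qed
  have key: "\<exists>j\<le>2. (a, b) \<in> G ^^ j" if ab: "(a, b) \<in> E" for a b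
  proof -
    obtain y where y: "pe (pe a b) y \<in> B" using ab EB by blast
    define w where "w = pe a (pe b (pe y 0))"
    define c where "c = p w"
    have qc: "q c = w" unfolding c_def by (rule qp)
    have Wa: "W a c" unfolding W_def qc using y by (simp add: c_def w_def)
    have Wb: "W b c" unfolding W_def qc using y by (simp add: c_def w_def)
    show ?thesis
    proof (cases "a = b")
      case True then show ?thesis by (intro exI[of _ 0]) simp
    next
      case False
      show ?thesis
      proof (cases "c = a \<or> c = b")
        case True
        then have "(a, b) \<in> G" unfolding G_def using Wa Wb False by auto
        then show ?thesis by (intro exI[of _ 1]) simp
      next
        case nc: False
        have "(a, c) \<in> G" "(c, b) \<in> G" unfolding G_def using Wa Wb nc by auto
        then have "(a, b) \<in> G ^^ 2" by (auto simp: numeral_2_eq_2)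
        then show ?thesis by blast
      qed
    qed
  qed
  have GstarE: "G\<^sup>* = E"
  proof
    show "G\<^sup>* \<subseteq> E" by (rule GsE)
    show "E \<subseteq> G\<^sup>*"
    proof
      fix xy assume "xy \<in> E"
      then obtain j where "xy \<in> G ^^ j" using key by (cases xy) blast
      then show "xy \<in> G\<^sup>*" by (rule relpow_imp_rtrancl)
    qed
  qed
  have diam: "has_diameter G 2"
    unfolding has_diameter_def
  proof (intro conjI allI impI)
    fix x y assume "(x, y) \<in> G\<^sup>*"
    then show "\<exists>j\<le>2. (x, y) \<in> G ^^ j" using key GsE by blast
  next
    fix k' :: nat assume k': "k' < 2"
    obtain y0 where y0: "pe (pe 0 0) y0 \<in> B" using Erefl[of 0] EB by blast
    define w1 where "w1 = pe 0 (pe 0 (pe y0 1))"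
    define w2 where "w2 = pe 0 (pe 0 (pe y0 2))"
    have w1ne: "w1 \<noteq> w2" unfolding w1_def w2_def by (simp add: prod_encode_eq)
    have "1 \<le> pe y0 1" by (rule pe_ge2)
    then have w1pos: "1 \<le> w1" unfolding w1_def using pe_ge2[of "pe y0 1" 0] pe_ge2[of "pe 0 (pe y0 1)" 0] by linarith
    have "2 \<le> pe y0 2" by (rule pe_ge2)
    then have w2pos: "1 \<le> w2" unfolding w2_def using pe_ge2[of "pe y0 2" 0] pe_ge2[of "pe 0 (pe y0 2)" 0] by linarith
    define c1 where "c1 = p w1"
    define c2 where "c2 = p w2"
    have c1pos: "c1 \<noteq> 0" unfolding c1_def using pge[of w1] w1pos by simp
    have c2pos: "c2 \<noteq> 0" unfolding c2_def using pge[of w2] w2pos by simp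
    have cne: "c1 \<noteq> c2" unfolding c1_def c2_def using strict_mono_eq[OF p(2)] w1ne by simp
    have "\<phi> c1 = \<phi> 0" unfolding c1_def p(3) w1_def by simp
    moreover have "\<phi> c2 = \<phi> 0" unfolding c2_def p(3) w2_def by simp
    ultimately have "(c1, c2) \<in> E" using ie_E[OF ie, of c1 0 c2 0] Erefl by blast
    then have inG: "(c1, c2) \<in> G\<^sup>*" using GstarE by simp
    have nW12: "\<not> W c1 c2" unfolding W_def c2_def qp w2_def using c1pos by simp
    have nW21: "\<not> W c2 c1" unfolding W_def c1_def qp w1_def using c2pos by simp
    have notG: "(c1, c2) \<notin> G" unfolding G_def using nW12 nW21 by auto
    have "\<not> (\<exists>j\<le>k'. (c1, c2) \<in> G ^^ j)"
    proof
      assume "\<exists>j\<le>k'. (c1, c2) \<in> G ^^ j"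
      then obtain j where j: "j \<le> k'" "(c1, c2) \<in> G ^^ j" by blast
      then have "j = 0 \<or> j = 1" using k' by auto
      then show False using j(2) cne notG by auto
    qed
    then show "\<not> (\<forall>x y. (x, y) \<in> G\<^sup>* \<longrightarrow> (\<exists>j\<le>k'. (x, y) \<in> G ^^ j))" using inG by blast
  qed
  have cx: "arith_pi n (rel_code G)"
  proof -
    define h1 where "h1 c = pe (pe (pf (q (ps c))) (pf (ps (q (ps c))))) (pf (ps (ps (q (ps c)))))" for c
    define h2 where "h2 c = pe (pe (pf (q (pf c))) (pf (ps (q (pf c))))) (pf (ps (ps (q (pf c)))))" for c
    define D0 where "D0 = {c. pf c \<noteq> ps c}"
    define D1 where "D1 = {c. p (q (ps c)) = ps c \<and> (pf c = pf (q (ps c)) \<or> pf c = pf (ps (q (ps c))))}"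
    define D2 where "D2 = {c. p (q (pf c)) = pf c \<and> (ps c = pf (q (pf c)) \<or> ps c = pf (ps (q (pf c))))}"
    have th1: "total_computable h1" unfolding tc_unary h1_def
      by (intro tc_encode tc_fst tc_snd tc_app[OF tq] tc_proj; simp)
    have th2: "total_computable h2" unfolding tc_unary h2_def
      by (intro tc_encode tc_fst tc_snd tc_app[OF tq] tc_proj; simp)
    have d0: "decidable_set D0" unfolding decidable_tp D0_def
      by (simp only: mem_Collect_eq) (intro tp_ne tc_fst tc_snd tc_proj; simp)
    have d1: "decidable_set D1" unfolding decidable_tp D1_def
      by (simp only: mem_Collect_eq) (intro tp_conj tp_disj tp_eq tc_app[OF p(1)] tc_app[OF tq] tc_fst tc_snd tc_proj; simp)
    have d2: "decidable_set D2" unfolding decidable_tp D2_def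
      by (simp only: mem_Collect_eq) (intro tp_conj tp_disj tp_eq tc_app[OF p(1)] tc_app[OF tq] tc_fst tc_snd tc_proj; simp)
    have "rel_code G = D0 \<inter> ((D1 \<inter> h1 -` B) \<union> (D2 \<inter> h2 -` B))"
    proof (intro set_eqI iffI)
      fix c assume "c \<in> rel_code G"
      then obtain x z where "c = pe x z" "(x, z) \<in> G" unfolding rel_code_def by auto
      then show "c \<in> D0 \<inter> ((D1 \<inter> h1 -` B) \<union> (D2 \<inter> h2 -` B))"
        unfolding G_def W_def D0_def D1_def D2_def h1_def h2_def by auto
    next
      fix c assume c: "c \<in> D0 \<inter> ((D1 \<inter> h1 -` B) \<union> (D2 \<inter> h2 -` B))"
      have "c = pe (pf c) (ps c)" by simp
      moreover have "(pf c, ps c) \<in> G"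
        using c unfolding G_def W_def D0_def D1_def D2_def h1_def h2_def by auto
      ultimately show "c \<in> rel_code G" unfolding rel_code_def by (metis image_eqI)
    qed
    moreover have "arith_pi n (D0 \<inter> ((D1 \<inter> h1 -` B) \<union> (D2 \<inter> h2 -` B)))"
      by (intro pi_int pi_un decidable_pi d0 d1 d2 pi_preimage B(1) th1 th2)
    ultimately show ?thesis by simp
  qed
  show ?thesis unfolding graphable_with_diameter_def simple_graph_def
    using cx symG irrG GstarE diam by blast
qed


end
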